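(* Let $A\in\mathbb Z^{m\times n}$, let $d\in\mathbb N_+$ with $d\leq\min(m,n)$, and let $(K,D,L)$ be a Smith normal form for $A$. If there exists $V\in\mathbb Z^{m\times d}$ whose columns lie in $\operatorname{span}_{\mathbb Z}(A)$ and such that the $\mathbb Z$-span of the columns of $V^T$ is $\mathbb Z^d$, then $\textnormal{1-count}(D)\geq d$.
   Context: A Smith normal form of $A\in\mathbb Z^{m\times n}$ is a triple $(K,D,L)$ with $A=KDL$, $K\in\mathrm{GL}(m,\mathbb Z)$, $L\in\mathrm{GL}(n,\mathbb Z)$, and $D\in\mathbb Z^{m\times n}$ zero except for positive diagonal entries $\mathfrak d_1,\dots,\mathfrak d_r$ in the top-left positions with $\mathfrak d_i\mid\mathfrak d_{i+1}$. $\textnormal{1-count}(D)$ is the number of diagonal entries of $D$ equal to $1$. $\operatorname{span}_{\mathbb Z}(M)$ is the set of integer linear combinations of the columns of $M$. *)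

theory Defs
  imports "Jordan_Normal_Form.Matrix"
begin

definition int_col_span :: "int mat \<Rightarrow> int vec set" where
  "int_col_span M = {mult_mat_vec M x | x. x \<in> carrier_vec (dim_col M)}"

definition smith_diag :: "nat \<Rightarrow> nat \<Rightarrow> int mat \<Rightarrow> bool" where
  "smith_diag m n D \<longleftrightarrow> D \<in> carrier_mat m n \<and>
     (\<exists>r \<le> min m n.
        (\<forall>i<m. \<forall>j<n. (i \<noteq> j \<or> r \<le> i) \<longrightarrow> D $$ (i, j) = 0) \<and>
        (\<forall>i<r. D $$ (i, i) > 0) \<and>
        (\<forall>i. i + 1 < r \<longrightarrow> D $$ (i, i) dvd D $$ (i + 1, i + 1)))"

definition is_smith_nf :: "int mat \<Rightarrow> int mat \<Rightarrow> int mat \<Rightarrow> int mat \<Rightarrow> bool" where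
  "is_smith_nf A K D L \<longleftrightarrow>
     K \<in> carrier_mat (dim_row A) (dim_row A) \<and> invertible_mat K \<and>
     L \<in> carrier_mat (dim_col A) (dim_col A) \<and> invertible_mat L \<and>
     smith_diag (dim_row A) (dim_col A) D \<and>
     A = K * D * L"

definition one_count :: "int mat \<Rightarrow> nat" where
  "one_count D = card {i. i < min (dim_row D) (dim_col D) \<and> D $$ (i, i) = 1}"

end

theory Submission
  imports Defs "Jordan_Normal_Form.Determinant"
begin

lemma mod_sum_cong:
  fixes f h :: "'b \<Rightarrow> int"
  assumes "\<And>x. x \<in> A \<Longrightarrow> f x mod g = h x mod g"
  shows "sum f A mod g = sum h A mod g"
proof -
  have "(\<Sum>i\<in>A. f i mod g) = (\<Sum>i\<in>A. h i mod g)" by (rule sum.cong) (use assms in auto)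
  then show ?thesis by (metis mod_sum_eq)
qed

lemma mod_prod_cong:
  fixes f h :: "'b \<Rightarrow> int"
  assumes "\<And>x. x \<in> A \<Longrightarrow> f x mod g = h x mod g"
  shows "prod f A mod g = prod h A mod g"
proof -
  have "(\<Prod>i\<in>A. f i mod g) = (\<Prod>i\<in>A. h i mod g)" by (rule prod.cong) (use assms in auto)
  then show ?thesis by (metis mod_prod_eq)
qed

lemma det_cong_int:
  fixes A B :: "int mat"
  assumes A: "A \<in> carrier_mat n n" and B: "B \<in> carrier_mat n n"
    and c: "\<forall>i<n. \<forall>j<n. A$$(i,j) mod g = B$$(i,j) mod g"
  shows "det A mod g = det B mod g"
proof -
  have "(\<Sum> p \<in> {p. p permutes {0 ..< n}}. signof p * (\<Prod> i = 0 ..< n. A $$ (i, p i))) mod g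
        = (\<Sum> p \<in> {p. p permutes {0 ..< n}}. signof p * (\<Prod> i = 0 ..< n. B $$ (i, p i))) mod g"
  proof (rule mod_sum_cong, rule mod_mult_cong[OF refl], rule mod_prod_cong)
    fix p i assume p: "p \<in> {p. p permutes {0 ..< n}}" and i: "i \<in> {0..<n}"
    have "p permutes {0..<n}" using p by simp
    then have "p i \<in> {0..<n}" using i by (simp only: permutes_in_image)
    then have "p i < n" by simp
    then show "A $$ (i, p i) mod g = B $$ (i, p i) mod g" using c i by auto
  qed
  moreover have d: "dim_row A = n" "dim_col A = n" "dim_row B = n" "dim_col B = n"
    using A B by auto
  ultimately show ?thesis unfolding det_def by (simp only: d if_P[OF refl] if_True)
qed

lemma dvd_entries_mult_l:
  fixes M Q :: "int mat"
  assumes M: "M \<in> carrier_mat a c" and Q: "Q \<in> carrier_mat c e"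
    and dv: "\<forall>i<a. \<forall>j<c. g dvd M$$(i,j)"
  shows "\<forall>i<a. \<forall>j<e. g dvd (M * Q)$$(i,j)"
proof (intro allI impI)
  fix i j assume i: "i < a" and j: "j < e"
  have "(M * Q)$$(i,j) = (\<Sum>k\<in>{0..<c}. M$$(i,k) * Q$$(k,j))"
    using M Q i j by (simp add: scalar_prod_def)
  also have "g dvd \<dots>"
  proof (rule dvd_sum)
    fix k assume "k \<in> {0..<c}"
    then have "g dvd M$$(i,k)" using dv i by auto
    then show "g dvd M$$(i,k) * Q$$(k,j)" by (rule dvd_mult2)
  qed
  finally show "g dvd (M * Q)$$(i,j)" .
qed

lemma dvd_entries_mult_r:
  fixes M Q :: "int mat"
  assumes M: "M \<in> carrier_mat a c" and Q: "Q \<in> carrier_mat c e"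
    and dv: "\<forall>i<c. \<forall>j<e. g dvd Q$$(i,j)"
  shows "\<forall>i<a. \<forall>j<e. g dvd (M * Q)$$(i,j)"
proof (intro allI impI)
  fix i j assume i: "i < a" and j: "j < e"
  have "(M * Q)$$(i,j) = (\<Sum>k\<in>{0..<c}. M$$(i,k) * Q$$(k,j))"
    using M Q i j by (simp add: scalar_prod_def)
  also have "g dvd \<dots>"
  proof (rule dvd_sum)
    fix k assume "k \<in> {0..<c}"
    then have "g dvd Q$$(k,j)" using dv j by auto
    then show "g dvd M$$(i,k) * Q$$(k,j)" by (rule dvd_mult)
  qed
  finally show "g dvd (M * Q)$$(i,j)" .
qed

lemma dvd_entries_mult:
  fixes P R Q :: "int mat"
  assumes P: "P \<in> carrier_mat a b" and R: "R \<in> carrier_mat b c" and Q: "Q \<in> carrier_mat c e"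
    and dv: "\<forall>i<b. \<forall>j<c. g dvd R$$(i,j)"
  shows "\<forall>i<a. \<forall>j<e. g dvd (P * R * Q)$$(i,j)"
proof -
  have "\<forall>i<a. \<forall>j<c. g dvd (P * R)$$(i,j)" by (rule dvd_entries_mult_r[OF P R dv])
  then show ?thesis by (rule dvd_entries_mult_l[OF mult_carrier_mat[OF P R] Q])
qed

theorem corollary6p12:
  fixes A K D L V :: "int mat" and m n d :: nat
  assumes "A \<in> carrier_mat m n"
    and "0 < d" and "d \<le> min m n"
    and "is_smith_nf A K D L"
    and "V \<in> carrier_mat m d"
    and "\<forall>j<d. col V j \<in> int_col_span A"
    and "int_col_span (transpose_mat V) = carrier_vec d"
  shows "one_count D \<ge> d"
proof (rule ccontr)
  assume ncount: "\<not> one_count D \<ge> d"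
  have Ac: "A \<in> carrier_mat m n" and Vc: "V \<in> carrier_mat m d" using assms by auto
  have Kc: "K \<in> carrier_mat m m" and Lc: "L \<in> carrier_mat n n" and Dc: "D \<in> carrier_mat m n"
    and AKDL: "A = K * D * L"
    using assms(4) Ac unfolding is_smith_nf_def smith_diag_def by auto
  obtain r where r: "r \<le> min m n"
    and Dz: "\<forall>i<m. \<forall>j<n. (i \<noteq> j \<or> r \<le> i) \<longrightarrow> D $$ (i, j) = 0"
    and Dpos: "\<forall>i<r. D $$ (i, i) > 0"
    and Ddvd: "\<forall>i. i + 1 < r \<longrightarrow> D $$ (i, i) dvd D $$ (i + 1, i + 1)"
    using assms(4) Ac unfolding is_smith_nf_def smith_diag_def by auto
  define S where "S = {i. i < min (dim_row D) (dim_col D) \<and> D $$ (i, i) = 1}"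
  have cS: "card S < d" using ncount unfolding one_count_def S_def by simp
  have "\<exists>i<d. i \<notin> S"
  proof (rule ccontr)
    assume "\<not> ?thesis"
    then have "{..<d} \<subseteq> S" by auto
    moreover have "finite S" unfolding S_def by auto
    ultimately have "card {..<d} \<le> card S" by (rule card_mono[rotated])
    then show False using cS by simp
  qed
  define s where "s = (LEAST i. i < d \<and> i \<notin> S)"
  have sd: "s < d" and sS: "s \<notin> S"
    using LeastI_ex[OF \<open>\<exists>i<d. i \<notin> S\<close>] unfolding s_def by auto
  have belows: "\<And>i. i < s \<Longrightarrow> i \<in> S"
    using not_less_Least[of _ "\<lambda>i. i < d \<and> i \<notin> S"] sd unfolding s_def[symmetric] by force
  have sm: "s < m" "s < n" using sd assms(3) by auto
  define g where "g = D $$ (s, s)"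
  have g1: "g \<noteq> 1" using sS sm Dc unfolding S_def g_def by auto
  have D1: "\<And>i. i < s \<Longrightarrow> D $$ (i, i) = 1" using belows Dc unfolding S_def by auto
  have chain: "\<And>k. s + k < r \<Longrightarrow> g dvd D $$ (s + k, s + k)"
  proof -
    fix k show "s + k < r \<Longrightarrow> g dvd D $$ (s + k, s + k)"
    proof (induction k)
      case 0 then show ?case unfolding g_def by simp
    next
      case (Suc k)
      then have "g dvd D $$ (s + k, s + k)" by simp
      moreover have "D $$ (s + k, s + k) dvd D $$ (s + k + 1, s + k + 1)"
        using Ddvd Suc.prems by simp
      ultimately show ?case using dvd_trans by simp
    qed
  qed
  have ndvd: "\<not> g dvd 1"
  proof
    assume gd: "g dvd 1"
    show False
    proof (cases "s < r")
      case True
      then have "g > 0" using Dpos unfolding g_def by auto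
      then have "g \<le> 1" using gd zdvd_imp_le by auto
      then show False using \<open>g > 0\<close> g1 by auto
    next
      case False
      then have "g = 0" using Dz sm unfolding g_def by auto
      then show False using gd by simp
    qed
  qed
  have "\<forall>j<d. \<exists>x. x \<in> carrier_vec n \<and> col V j = A *\<^sub>v x"
    using assms(6) Ac unfolding int_col_span_def by auto
  then obtain xf where xf: "\<And>j. j < d \<Longrightarrow> xf j \<in> carrier_vec n \<and> col V j = A *\<^sub>v xf j"
    by metis
  have "\<forall>j<d. \<exists>y. y \<in> carrier_vec m \<and> unit_vec d j = transpose_mat V *\<^sub>v y"
  proof (intro allI impI)
    fix j assume "j < d"
    have "unit_vec d j \<in> int_col_span (transpose_mat V)" using assms(7) by auto
    then show "\<exists>y. y \<in> carrier_vec m \<and> unit_vec d j = transpose_mat V *\<^sub>v y"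
      using Vc unfolding int_col_span_def by auto
  qed
  then obtain yf where yf: "\<And>j. j < d \<Longrightarrow> yf j \<in> carrier_vec m \<and> unit_vec d j = transpose_mat V *\<^sub>v yf j"
    by metis
  define X where "X = mat n d (\<lambda>(i,j). xf j $ i)"
  define Y where "Y = mat m d (\<lambda>(i,j). yf j $ i)"
  have Xc: "X \<in> carrier_mat n d" and Yc: "Y \<in> carrier_mat m d" unfolding X_def Y_def by auto
  have VAX: "V = A * X"
  proof (rule eq_matI)
    fix i j assume i: "i < dim_row (A * X)" and j: "j < dim_col (A * X)"
    have "col X j = xf j" using xf[of j] j Xc unfolding X_def by (auto simp: col_def)
    have "V $$ (i, j) = col V j $ i" using i j Vc Ac Xc by simp
    also have "\<dots> = (A *\<^sub>v xf j) $ i" using xf[of j] j Xc by simp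
    finally show "V $$ (i, j) = (A * X) $$ (i, j)"
      using \<open>col X j = xf j\<close> i j Ac Xc Vc by simp
  qed (use Ac Xc Vc in auto)
  have VY: "transpose_mat V * Y = 1\<^sub>m d"
  proof (rule eq_matI)
    fix i j assume i: "i < dim_row (1\<^sub>m d)" and j: "j < dim_col (1\<^sub>m d)"
    have "col Y j = yf j" using yf[of j] j Yc unfolding Y_def by (auto simp: col_def)
    have "(transpose_mat V * Y) $$ (i, j) = (transpose_mat V *\<^sub>v yf j) $ i"
      using \<open>col Y j = yf j\<close> i j Yc Vc by simp
    also have "\<dots> = unit_vec d j $ i" using yf[of j] j by simp
    finally show "(transpose_mat V * Y) $$ (i, j) = 1\<^sub>m d $$ (i, j)"
      using i j by simp
  qed (use Yc Vc in auto)
  define P where "P = transpose_mat Y * K"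
  define Q where "Q = L * X"
  have Pc: "P \<in> carrier_mat d m" using Yc Kc unfolding P_def by auto
  have Qc: "Q \<in> carrier_mat n d" using Lc Xc unfolding Q_def by auto
  have YTc: "transpose_mat Y \<in> carrier_mat d m" using Yc by auto
  have KDc: "K * D \<in> carrier_mat m n" using Kc Dc by auto
  have PDc: "P * D \<in> carrier_mat d n" using Pc Dc by auto
  have s1: "transpose_mat Y * (K * D) = P * D"
    unfolding P_def by (rule assoc_mult_mat[symmetric, OF YTc Kc Dc])
  have s2: "transpose_mat Y * (K * D * L) = transpose_mat Y * (K * D) * L"
    by (rule assoc_mult_mat[symmetric, OF YTc KDc Lc])
  have s3: "P * D * L * X = P * D * Q"
    unfolding Q_def by (rule assoc_mult_mat[OF PDc Lc Xc])
  have KDLc: "K * D * L \<in> carrier_mat m n" using KDc Lc by auto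
  have s4: "transpose_mat Y * (K * D * L * X) = transpose_mat Y * (K * D * L) * X"
    by (rule assoc_mult_mat[symmetric, OF YTc KDLc Xc])
  have IPDQ: "1\<^sub>m d = P * D * Q"
  proof -
    have "1\<^sub>m d = transpose_mat (transpose_mat V * Y)" using VY by simp
    also have "\<dots> = transpose_mat Y * V" using Vc Yc by (simp add: transpose_mult[of _ d m])
    also have "\<dots> = transpose_mat Y * (K * D * L * X)" using VAX AKDL by simp
    also have "\<dots> = P * D * Q" using s1 s2 s3 s4 by simp
    finally show ?thesis .
  qed
  define E where "E = mat m d (\<lambda>(i,j). if i = j \<and> j < s then 1 else (0::int))"
  define F where "F = mat d n (\<lambda>(i,j). if i = j \<and> i < s then 1 else (0::int))"
  define G where "G = mat d d (\<lambda>(i,j). if i = j \<and> i < s then 1 else (0::int))"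
  have Ec: "E \<in> carrier_mat m d" and Fc: "F \<in> carrier_mat d n" and Gc: "G \<in> carrier_mat d d"
    unfolding E_def F_def G_def by auto
  have EF: "(E * F) $$ (i, j) = (if i = j \<and> i < s then 1 else 0)" if i: "i < m" and j: "j < n" for i j
  proof -
    have "(E * F) $$ (i, j) = (\<Sum>k\<in>{0..<d}. E $$ (i, k) * F $$ (k, j))"
      using i j Ec Fc by (simp add: scalar_prod_def)
    also have "\<dots> = (\<Sum>k\<in>{0..<d}. if k = i then (if i = j \<and> i < s then 1 else 0) else (0::int))"
      by (rule sum.cong) (use i j in \<open>auto simp: E_def F_def\<close>)
    also have "\<dots> = (if i = j \<and> i < s then 1 else 0)" using sd by auto
    finally show ?thesis .
  qed
  have EG: "E * G = E"
  proof (rule eq_matI)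
    fix i j assume i: "i < dim_row E" and j: "j < dim_col E"
    have "(E * G) $$ (i, j) = (\<Sum>k\<in>{0..<d}. E $$ (i, k) * G $$ (k, j))"
      using i j Ec Gc by (simp add: scalar_prod_def)
    also have "\<dots> = (\<Sum>k\<in>{0..<d}. if k = j then (if i = j \<and> j < s then 1 else 0) else (0::int))"
      by (rule sum.cong) (use i j Ec in \<open>auto simp: E_def G_def\<close>)
    also have "\<dots> = E $$ (i, j)" using i j Ec unfolding E_def by auto
    finally show "(E * G) $$ (i, j) = E $$ (i, j)" .
  qed (use Ec Gc in auto)
  define R where "R = D - E * F"
  have EFc: "E * F \<in> carrier_mat m n" using Ec Fc by auto
  have Rc: "R \<in> carrier_mat m n" unfolding R_def by (rule minus_carrier_mat[OF EFc])
  have Rdvd: "\<forall>i<m. \<forall>j<n. g dvd R $$ (i, j)"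
  proof (intro allI impI)
    fix i j assume i: "i < m" and j: "j < n"
    have "R $$ (i, j) = D $$ (i, j) - (E * F) $$ (i, j)"
      unfolding R_def using i j EFc by (subst index_minus_mat(1)) auto
    then have Rij: "R $$ (i, j) = D $$ (i, j) - (if i = j \<and> i < s then 1 else 0)"
      using EF[OF i j] by simp
    show "g dvd R $$ (i, j)"
    proof (cases "i = j")
      case False then show ?thesis using Rij Dz i j by auto
    next
      case True
      show ?thesis
      proof (cases "i < s")
        case True then show ?thesis using Rij D1 \<open>i = j\<close> by auto
      next
        case False
        show ?thesis
        proof (cases "i < r")
          case True
          have "g dvd D $$ (s + (i - s), s + (i - s))" using chain[of "i - s"] True False by auto
          then show ?thesis using Rij False \<open>i = j\<close> by auto
        next
          case False2: False
          then show ?thesis using Rij Dz i j \<open>\<not> i < s\<close> by auto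
        qed
      qed
    qed
  qed
  have DEFR: "D = E * F + R"
    by (rule eq_matI) (use Dc EFc in \<open>auto simp: R_def\<close>)
  have PEFQc: "P * (E * F) * Q \<in> carrier_mat d d" using Pc EFc Qc by auto
  have PRQc: "P * R * Q \<in> carrier_mat d d" using Pc Rc Qc by auto
  have splitm: "P * D * Q = P * (E * F) * Q + P * R * Q"
  proof -
    have "P * D = P * (E * F) + P * R" unfolding DEFR using Pc EFc Rc by (rule mult_add_distrib_mat)
    then have "P * D * Q = (P * (E * F) + P * R) * Q" by simp
    also have "\<dots> = P * (E * F) * Q + P * R * Q"
      by (rule add_mult_distrib_mat) (use Pc EFc Rc Qc in auto)
    finally show ?thesis .
  qed
  have PRQd: "\<forall>i<d. \<forall>j<d. g dvd (P * R * Q) $$ (i, j)"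
    by (rule dvd_entries_mult[OF Pc Rc Qc Rdvd])
  have modeq: "\<forall>i<d. \<forall>j<d. (1\<^sub>m d) $$ (i, j) mod g = (P * (E * F) * Q) $$ (i, j) mod g"
  proof (intro allI impI)
    fix i j assume i: "i < d" and j: "j < d"
    have "(1\<^sub>m d) $$ (i, j) = (P * (E * F) * Q + P * R * Q) $$ (i, j)"
      using IPDQ splitm by simp
    also have "\<dots> = (P * (E * F) * Q) $$ (i, j) + (P * R * Q) $$ (i, j)"
      by (rule index_add_mat(1)) (use i j PRQc in auto)
    finally have eqij: "(1\<^sub>m d) $$ (i, j) = (P * (E * F) * Q) $$ (i, j) + (P * R * Q) $$ (i, j)" .
    have "g dvd (P * R * Q) $$ (i, j)" using PRQd i j by auto
    then obtain k where k: "(P * R * Q) $$ (i, j) = g * k" by (elim dvdE)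
    show "(1\<^sub>m d) $$ (i, j) mod g = (P * (E * F) * Q) $$ (i, j) mod g"
      unfolding eqij k by simp
  qed
  have detmod: "det (1\<^sub>m d) mod g = det (P * (E * F) * Q) mod g"
    by (rule det_cong_int[OF _ PEFQc modeq]) auto
  have PEc: "P * E \<in> carrier_mat d d" using Pc Ec by auto
  have FQc: "F * Q \<in> carrier_mat d d" using Fc Qc by auto
  have a1: "P * (E * F) = P * E * F" by (rule assoc_mult_mat[symmetric, OF Pc Ec Fc])
  have a2: "P * E = P * E * G" using EG assoc_mult_mat[OF Pc Ec Gc] by simp
  have PEGc: "P * E * G \<in> carrier_mat d d" using PEc Gc by auto
  have a3: "P * E * G * F * Q = P * E * G * (F * Q)" by (rule assoc_mult_mat[OF PEGc Fc Qc])
  have "P * (E * F) * Q = P * E * F * Q" by (simp only: a1)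
  also have "\<dots> = P * E * G * F * Q" by (simp only: a2[symmetric])
  also have "\<dots> = P * E * G * (F * Q)" by (rule a3)
  finally have eq2: "P * (E * F) * Q = P * E * G * (F * Q)" .
  have detG: "det G = 0"
  proof -
    have ut: "upper_triangular G" unfolding G_def upper_triangular_def by auto
    have "det G = prod_list (diag_mat G)" by (rule det_upper_triangular[OF ut Gc])
    also have "\<dots> = (\<Prod>i = 0 ..< d. G $$ (i, i))" using Gc by (simp add: prod_list_diag_prod)
    also have "\<dots> = 0" using sd unfolding G_def by (auto intro!: prod_zero)
    finally show ?thesis .
  qed
  have dd1: "det (P * (E * F) * Q) = det (P * E * G) * det (F * Q)"
    unfolding eq2 by (rule det_mult[OF PEGc FQc])
  have dd2: "det (P * E * G) = det (P * E) * det G" by (rule det_mult[OF PEc Gc])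
  have "det (P * (E * F) * Q) = 0" using dd1 dd2 detG by simp
  then have "(1::int) mod g = 0" using detmod by simp
  then have "g dvd 1" by (simp only: dvd_eq_mod_eq_0)
  then show False using ndvd by blast
qed

end
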